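(* Let $P=\{p_1,\dots,p_n\}$ be weighted points in $\mathbb{R}^2$ with total weight $1$, let $S=\{s_1,\dots,s_m\}$ be triangles in $\mathbb{R}^2$ of total area $1$ with longest edge length $\Delta$, let $\delta>0$, and let $Q$ be the set of cells produced by the subdivision described in the context. Then $|Q|=O\!\left(\frac{nm}{\delta^2}\log\frac{nm\Delta}{\delta}\right)$.
   Context: Subdivision: overlay a uniform grid of $\Delta\times\Delta$ square cells and keep the cells that intersect a triangle of $S$. Recursively process each cell: if there is a point of $P$ such that the whole cell lies within Euclidean distance $\delta/\sqrt{nm}$ of it, stop; otherwise, if for some point of $P$ the ratio of the distances to the furthest and closest point of the cell exceeds $1+\delta$, split the cell into four equal squares and recurse; otherwise stop. $Q$ is the set of resulting cells. *)

theory Defs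
  imports "HOL-Analysis.Analysis"
begin

type_synonym pt = "real \<times> real"

definition cell :: "pt \<Rightarrow> real \<Rightarrow> pt set" where
  "cell c r = cbox c (c + (r, r))"

definition triangle :: "pt \<times> pt \<times> pt \<Rightarrow> pt set" where
  "triangle t = (case t of (a, b, c) \<Rightarrow> convex hull {a, b, c})"

definition tri_area :: "pt \<times> pt \<times> pt \<Rightarrow> real" where
  "tri_area t = measure lborel (triangle t)"

definition edge_lengths :: "pt \<times> pt \<times> pt \<Rightarrow> real set" where
  "edge_lengths t = (case t of (a, b, c) \<Rightarrow> {dist a b, dist b c, dist c a})"

definition close_stop :: "pt set \<Rightarrow> real \<Rightarrow> pt set \<Rightarrow> bool" where
  "close_stop P rho C \<longleftrightarrow> (\<exists>p\<in>P. C \<subseteq> cball p rho)"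

definition ratio_split :: "pt set \<Rightarrow> real \<Rightarrow> pt set \<Rightarrow> bool" where
  "ratio_split P \<delta> C \<longleftrightarrow>
     (\<exists>p\<in>P. Sup (dist p ` C) > (1 + \<delta>) * Inf (dist p ` C))"

definition splits :: "pt set \<Rightarrow> real \<Rightarrow> real \<Rightarrow> pt set \<Rightarrow> bool" where
  "splits P rho \<delta> C \<longleftrightarrow> \<not> close_stop P rho C \<and> ratio_split P \<delta> C"

inductive_set visited :: "pt set \<Rightarrow> real \<Rightarrow> real \<Rightarrow> (pt \<times> real) set \<Rightarrow> (pt \<times> real) set"
  for P rho \<delta> G where
  base: "x \<in> G \<Longrightarrow> x \<in> visited P rho \<delta> G"
| child: "(c, r) \<in> visited P rho \<delta> G \<Longrightarrow> splits P rho \<delta> (cell c r) \<Longrightarrow>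
          d \<in> {c, c + (r/2, 0), c + (0, r/2), c + (r/2, r/2)} \<Longrightarrow>
          (d, r/2) \<in> visited P rho \<delta> G"

definition grid_cells :: "pt \<Rightarrow> real \<Rightarrow> (pt \<times> pt \<times> pt) set \<Rightarrow> (pt \<times> real) set" where
  "grid_cells z \<Delta> S = {(z + (of_int i * \<Delta>, of_int j * \<Delta>), \<Delta>) | i j.
      \<exists>t\<in>S. cell (z + (of_int i * \<Delta>, of_int j * \<Delta>)) \<Delta> \<inter> triangle t \<noteq> {}}"

definition subdivision :: "pt set \<Rightarrow> (pt \<times> pt \<times> pt) set \<Rightarrow> pt \<Rightarrow> real \<Rightarrow> real \<Rightarrow> real \<Rightarrow> pt set set" where
  "subdivision P S z \<Delta> rho \<delta> =
     {cell c r | c r. (c, r) \<in> visited P rho \<delta> (grid_cells z \<Delta> S) \<and> \<not> splits P rho \<delta> (cell c r)}"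

end

theory Submission
  imports Defs
begin

definition g2 :: "real^2 \<Rightarrow> real \<times> real" where "g2 v = (v$1, v$2)"
definition h2 :: "real \<times> real \<Rightarrow> real^2" where "h2 x = vector [fst x, snd x]"

lemma g2h2[simp]: "g2 (h2 x) = x" by (simp add: g2_def h2_def)
lemma h2g2[simp]: "h2 (g2 v) = v"
  by (simp add: g2_def h2_def vec_eq_iff forall_2)

lemma linear_h2: "linear h2"
  by (rule linearI) (auto simp: h2_def vec_eq_iff forall_2)

lemma cont_g2: "continuous_on UNIV g2"
  unfolding g2_def by (intro continuous_intros)

lemma g2_meas: "g2 \<in> borel_measurable lborel"
  by (simp add: cont_g2 borel_measurable_continuous_onI)

lemma lborel_g2: "(lborel :: (real \<times> real) measure) = distr lborel borel g2"
proof (rule lborel_eqI)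
  fix l u :: "real \<times> real"
  assume le: "\<And>b. b \<in> Basis \<Longrightarrow> l \<bullet> b \<le> u \<bullet> b"
  obtain l1 l2 y1 y2 where lu: "l = (l1,l2)" "u = (y1,y2)" by (cases l, cases u) auto
  have "g2 -` box l u = box (h2 l) (h2 u)"
    by (auto simp: lu mem_box_cart g2_def h2_def mem_box Basis_prod_def forall_2)
  moreover have "l1 \<le> y1" "l2 \<le> y2" using le[of "(1,0)"] le[of "(0,1)"] by (auto simp: lu Basis_prod_def)
  ultimately have e: "emeasure (distr lborel borel g2) (box l u) = emeasure lborel (box (h2 l) (h2 u))"
    by (subst emeasure_distr[OF g2_meas]) auto
  have B: "(Basis :: (real^2) set) = {axis 1 1, axis 2 1}"
    by (auto simp: Basis_vec_def) (metis exhaust_2)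
  have ne: "axis 1 (1::real) \<noteq> (axis 2 1 :: real^2)" by (simp add: axis_eq_axis)
  have "emeasure lborel (box (h2 l) (h2 u)) = ennreal ((y1 - l1) * (y2 - l2))"
    using \<open>l1 \<le> y1\<close> \<open>l2 \<le> y2\<close>
    by (simp add: emeasure_lborel_box_eq B ne lu h2_def inner_axis)
  moreover have "(\<Prod>b\<in>Basis. (u - l) \<bullet> b) = (y1 - l1) * (y2 - l2)"
    by (simp add: Basis_prod_def lu prod.union_disjoint)
  ultimately show "emeasure (distr lborel borel g2) (box l u) = (\<Prod>b\<in>Basis. (u - l) \<bullet> b)"
    using e by simp
qed simp

lemma cross_le: "\<bar>(x1::real) * y2 - y1 * x2\<bar> \<le> sqrt (y1^2 + y2^2) * sqrt (x1^2 + x2^2)"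
proof -
  have "\<bar>x1 * y2 - y1 * x2\<bar>^2 \<le> (y1^2 + y2^2) * (x1^2 + x2^2)"
  proof -
    have "(y1^2 + y2^2) * (x1^2 + x2^2) - \<bar>x1 * y2 - y1 * x2\<bar>^2 = (y1*x1 + y2*x2)^2"
      by (simp add: power2_eq_square algebra_simps)
    thus ?thesis by (metis diff_ge_0_iff_ge zero_le_power2)
  qed
  hence "\<bar>x1 * y2 - y1 * x2\<bar> \<le> sqrt ((y1^2 + y2^2) * (x1^2 + x2^2))"
    by (rule real_le_rsqrt)
  thus ?thesis by (simp add: real_sqrt_mult)
qed

lemma tri_area_le: "tri_area (a, b, c) \<le> dist a b * dist a c / 2"
proof -
  let ?T = "convex hull {a, b, c}"
  have cpt: "compact ?T" by (intro finite_imp_compact_convex_hull) auto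
  hence Tb: "?T \<in> sets borel" by (simp add: borel_compact)
  have "tri_area (a,b,c) = measure (distr lborel borel g2) ?T"
    unfolding tri_area_def triangle_def by (simp flip: lborel_g2)
  also have "\<dots> = measure lborel (g2 -` ?T)"
    by (subst measure_distr[OF g2_meas]) (use Tb in auto)
  also have "g2 -` ?T = h2 ` ?T"
    by (auto simp: image_iff) (metis h2g2)
  also have "h2 ` ?T = convex hull {h2 a, h2 b, h2 c}"
    by (simp add: convex_hull_linear_image linear_h2)
  also have "measure lborel (convex hull {h2 a, h2 b, h2 c}) =
    \<bar>(h2 c $ 1 - h2 a $ 1) * (h2 b $ 2 - h2 a $ 2) - (h2 b $ 1 - h2 a $ 1) * (h2 c $ 2 - h2 a $ 2)\<bar> / 2"
    by (rule content_triangle)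
  also have "\<dots> = \<bar>(fst c - fst a) * (snd b - snd a) - (fst b - fst a) * (snd c - snd a)\<bar> / 2"
    by (simp add: h2_def)
  also have "\<dots> \<le> dist a b * dist a c / 2"
  proof -
    have "dist a b = sqrt ((fst b - fst a)^2 + (snd b - snd a)^2)"
      by (cases a, cases b) (simp add: dist_Pair_Pair dist_real_def power2_commute)
    moreover have "dist a c = sqrt ((fst c - fst a)^2 + (snd c - snd a)^2)"
      by (cases a, cases c) (simp add: dist_Pair_Pair dist_real_def power2_commute)
    ultimately show ?thesis using cross_le[of "fst c - fst a" "snd b - snd a" "fst b - fst a" "snd c - snd a"]
      by simp
  qed
  finally show ?thesis .
qed

lemma int_interval_card:
  fixes r R a q :: real
  assumes r: "r > 0" and R: "R \<ge> 0"
  shows "finite {i::int. \<bar>a + r * of_int i - q\<bar> \<le> R} \<and>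
         real (card {i::int. \<bar>a + r * of_int i - q\<bar> \<le> R}) \<le> 2 * R / r + 1"
proof -
  define lo where "lo = (q - a - R) / r"
  define hi where "hi = (q - a + R) / r"
  have sub: "{i::int. \<bar>a + r * of_int i - q\<bar> \<le> R} \<subseteq> {\<lceil>lo\<rceil>..\<lfloor>hi\<rfloor>}"
  proof
    fix i assume "i \<in> {i::int. \<bar>a + r * of_int i - q\<bar> \<le> R}"
    hence h: "q - a - R \<le> r * of_int i" "r * of_int i \<le> q - a + R" by auto
    have "lo \<le> of_int i" using h(1) r by (simp add: lo_def divide_le_eq mult.commute)
    moreover have "of_int i \<le> hi" using h(2) r by (simp add: hi_def le_divide_eq mult.commute)
    ultimately show "i \<in> {\<lceil>lo\<rceil>..\<lfloor>hi\<rfloor>}" by (simp add: ceiling_le le_floor_iff)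
  qed
  have fin: "finite {i::int. \<bar>a + r * of_int i - q\<bar> \<le> R}" using sub finite_subset by blast
  have "card {i::int. \<bar>a + r * of_int i - q\<bar> \<le> R} \<le> card {\<lceil>lo\<rceil>..\<lfloor>hi\<rfloor>}"
    using sub by (intro card_mono) auto
  also have "card {\<lceil>lo\<rceil>..\<lfloor>hi\<rfloor>} = nat (\<lfloor>hi\<rfloor> - \<lceil>lo\<rceil> + 1)" by simp
  finally have c: "real (card {i::int. \<bar>a + r * of_int i - q\<bar> \<le> R}) \<le> real (nat (\<lfloor>hi\<rfloor> - \<lceil>lo\<rceil> + 1))"
    by linarith
  have "hi - lo = 2 * R / r" using r by (simp add: hi_def lo_def field_simps)
  moreover have "real (nat (\<lfloor>hi\<rfloor> - \<lceil>lo\<rceil> + 1)) \<le> max 0 (hi - lo + 1)"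
  proof -
    have "real_of_int (\<lfloor>hi\<rfloor> - \<lceil>lo\<rceil> + 1) = real_of_int \<lfloor>hi\<rfloor> - real_of_int \<lceil>lo\<rceil> + 1" by simp
    hence "real_of_int (\<lfloor>hi\<rfloor> - \<lceil>lo\<rceil> + 1) \<le> hi - lo + 1"
      using of_int_floor_le[of hi] le_of_int_ceiling[of lo] by linarith
    thus ?thesis by (cases "\<lfloor>hi\<rfloor> - \<lceil>lo\<rceil> + 1 \<ge> 0") auto
  qed
  moreover have "hi - lo + 1 \<ge> 0" using \<open>hi - lo = 2 * R / r\<close> r R by simp
  ultimately show ?thesis using fin c by simp
qed

lemma mem_cell: "x \<in> cell c r \<longleftrightarrow> fst c \<le> fst x \<and> fst x \<le> fst c + r \<and> snd c \<le> snd x \<and> snd x \<le> snd c + r"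
  by (cases x, cases c) (auto simp: cell_def cbox_Pair_eq)

lemma dist_le_abs: "dist (x::pt) y \<le> \<bar>fst x - fst y\<bar> + \<bar>snd x - snd y\<bar>"
  by (cases x, cases y) (simp add: dist_Pair_Pair dist_real_def sqrt_sum_squares_le_sum_abs)

lemma cell_diam: "x \<in> cell c r \<Longrightarrow> y \<in> cell c r \<Longrightarrow> dist x y \<le> 2 * r"
  using dist_le_abs[of x y] by (auto simp: mem_cell abs_le_iff)

lemma corner_in: "r \<ge> 0 \<Longrightarrow> c \<in> cell c r"
  by (simp add: mem_cell)

lemma split_geom:
  assumes d: "0 < \<delta>" "\<delta> \<le> 1" and r: "r \<ge> 0" and sp: "splits P \<rho> \<delta> (cell c r)"
  shows "\<exists>p\<in>P. dist p c \<le> 4 * r / \<delta> \<and> \<rho> < 4 * r / \<delta>"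
proof -
  let ?C = "cell c r"
  from sp obtain p where pP: "p \<in> P" and rs: "Sup (dist p ` ?C) > (1 + \<delta>) * Inf (dist p ` ?C)"
    and nc: "\<not> ?C \<subseteq> cball p \<rho>"
    by (auto simp: splits_def ratio_split_def close_stop_def)
  define I where "I = Inf (dist p ` ?C)"
  have ne: "dist p ` ?C \<noteq> {}" using corner_in[OF r, of c] by auto
  have lo: "dist p x - 2 * r \<le> I" if "x \<in> ?C" for x
    unfolding I_def
  proof (rule cInf_greatest[OF ne])
    fix v assume "v \<in> dist p ` ?C"
    then obtain y where y: "y \<in> ?C" "v = dist p y" by auto
    have "dist p x \<le> dist p y + dist y x" by (rule dist_triangle)
    thus "dist p x - 2 * r \<le> v" using cell_diam[OF y(1) that] y(2) by linarith
  qed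
  have "Sup (dist p ` ?C) \<le> I + 2 * r"
    by (rule cSup_least[OF ne]) (use lo in force)
  hence "\<delta> * I < 2 * r" using rs unfolding I_def by (simp add: algebra_simps)
  hence "I < 2 * r / \<delta>" using d by (simp add: field_simps)
  have "2 * r \<le> 2 * r / \<delta>" using d r by (simp add: field_simps mult_left_le_one_le)
  hence all: "dist p x < 4 * r / \<delta>" if "x \<in> ?C" for x
    using lo[OF that] \<open>I < 2 * r / \<delta>\<close> by simp
  have "\<rho> < 4 * r / \<delta>"
  proof (rule ccontr)
    assume "\<not> \<rho> < 4 * r / \<delta>"
    hence "?C \<subseteq> cball p \<rho>" using all by (force simp: mem_cball)
    thus False using nc by simp
  qed
  thus ?thesis using pP all[OF corner_in[OF r]] less_imp_le by blast
qed

lemma levels0: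
  assumes "x \<in> visited P \<rho> \<delta> (grid_cells z \<Delta> S)"
  shows "\<exists>k::nat. \<exists>i j::int. snd x = \<Delta> / 2^k \<and> fst x = z + (snd x * of_int i, snd x * of_int j)"
  using assms
proof (induction rule: visited.induct)
  case (base x)
  then obtain i j where "x = (z + (of_int i * \<Delta>, of_int j * \<Delta>), \<Delta>)"
    by (auto simp: grid_cells_def)
  then show ?case by (intro exI[of _ 0] exI[of _ i] exI[of _ j]) (simp add: mult.commute)
next
  case (child c r d)
  from child.IH have "\<exists>k i j. r = \<Delta> / 2^k \<and> c = z + (r * of_int i, r * of_int j)" by simp
  then obtain k i j where kij: "r = \<Delta> / 2^k" "c = z + (r * of_int i, r * of_int j)" by blast
  have r2: "r / 2 = \<Delta> / 2^(Suc k)" using kij by simp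
  have e1: "c = z + (r/2 * of_int (2*i), r/2 * of_int (2*j))" using kij(2) by simp
  have e2: "c + (r/2, 0) = z + (r/2 * of_int (2*i+1), r/2 * of_int (2*j))" using kij(2)
    by (simp add: algebra_simps)
  have e3: "c + (0, r/2) = z + (r/2 * of_int (2*i), r/2 * of_int (2*j+1))" using kij(2)
    by (simp add: algebra_simps)
  have e4: "c + (r/2, r/2) = z + (r/2 * of_int (2*i+1), r/2 * of_int (2*j+1))" using kij(2)
    by (simp add: algebra_simps)
  from child(3) have "\<exists>i' j'. d = z + (r/2 * of_int i', r/2 * of_int j')"
    using e1 e2 e3 e4 by blast
  then show ?case using r2 by (metis fst_conv snd_conv)
qed

lemma levels:
  assumes "(c, r) \<in> visited P \<rho> \<delta> (grid_cells z \<Delta> S)"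
  shows "\<exists>k::nat. \<exists>i j::int. r = \<Delta> / 2^k \<and> c = z + (r * of_int i, r * of_int j)"
  using levels0[OF assms] by simp

lemma card_Ks:
  fixes Y :: real
  assumes Y: "Y \<ge> 1"
  shows "finite {k::nat. 2^k < Y} \<and> real (card {k::nat. 2^k < Y}) \<le> log 2 Y + 1"
proof -
  have sub: "{k::nat. 2^k < Y} \<subseteq> {..< nat \<lceil>log 2 Y\<rceil>}"
  proof
    fix k assume "k \<in> {k::nat. 2^k < Y}"
    hence "2 powr real k < Y" by (simp add: powr_realpow)
    hence "log 2 (2 powr real k) < log 2 Y" using Y by (subst log_less_cancel_iff) auto
    hence "real k < log 2 Y" by simp
    hence "real_of_int (int k) < real_of_int \<lceil>log 2 Y\<rceil>"
      using le_of_int_ceiling[of "log 2 Y"] by simp linarith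
    hence "int k < \<lceil>log 2 Y\<rceil>" by (simp only: of_int_less_iff)
    thus "k \<in> {..< nat \<lceil>log 2 Y\<rceil>}" by simp
  qed
  have "card {k::nat. 2^k < Y} \<le> nat \<lceil>log 2 Y\<rceil>"
    using card_mono[OF _ sub] by simp
  moreover have "log 2 Y \<ge> 0" using Y by simp
  moreover have "real (nat \<lceil>log 2 Y\<rceil>) \<le> log 2 Y + 1"
    using \<open>log 2 Y \<ge> 0\<close> by (simp add: of_nat_nat ceiling_correct)
  ultimately have "real (card {k::nat. 2^k < Y}) \<le> log 2 Y + 1"
    by (meson of_nat_le_iff order_trans)
  thus ?thesis using finite_subset[OF sub] by simp
qed

lemma split_count:
  fixes z :: pt and S :: "(pt \<times> pt \<times> pt) set"
  assumes P: "finite P" and d: "0 < \<delta>" "\<delta> \<le> 1" and rho: "\<rho> > 0" and D: "\<Delta> > 0"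
    and Y: "4 * \<Delta> / (\<rho> * \<delta>) \<ge> 1"
  defines "SV \<equiv> {x \<in> visited P \<rho> \<delta> (grid_cells z \<Delta> S). splits P \<rho> \<delta> (cell (fst x) (snd x))}"
  shows "finite SV \<and> real (card SV) \<le> real (card P) * (log 2 (4 * \<Delta> / (\<rho> * \<delta>)) + 1) * (8 / \<delta> + 1)^2"
proof -
  define Y where "Y = 4 * \<Delta> / (\<rho> * \<delta>)"
  define Ks where "Ks = {k::nat. 2^k < Y}"
  define rk where "rk k = \<Delta> / 2^k" for k :: nat
  define I where "I p k = {i::int. \<bar>fst z + rk k * of_int i - fst p\<bar> \<le> 4 * rk k / \<delta>}" for p :: pt and k
  define J where "J p k = {i::int. \<bar>snd z + rk k * of_int i - snd p\<bar> \<le> 4 * rk k / \<delta>}" for p :: pt and k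
  define F where "F k = (\<lambda>(i::int, j::int). (z + (rk k * of_int i, rk k * of_int j), rk k))" for k
  have rk_pos: "rk k > 0" for k using D by (simp add: rk_def)
  have IJ: "finite (I p k) \<and> finite (J p k) \<and> real (card (I p k)) \<le> 8 / \<delta> + 1 \<and> real (card (J p k)) \<le> 8 / \<delta> + 1" for p k
  proof -
    have e: "2 * (4 * rk k / \<delta>) / rk k = 8 / \<delta>" using rk_pos[of k] by (simp add: field_simps)
    have "0 \<le> 4 * rk k / \<delta>" using rk_pos[of k] d by simp
    thus ?thesis using int_interval_card[OF rk_pos[of k], of "4 * rk k / \<delta>"] e
      unfolding I_def J_def by metis
  qed
  have Ksf: "finite Ks" and Ksc: "real (card Ks) \<le> log 2 Y + 1"
    using card_Ks[of Y] Y by (simp_all add: Ks_def Y_def)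
  have sub: "SV \<subseteq> (\<Union>p\<in>P. \<Union>k\<in>Ks. F k ` (I p k \<times> J p k))"
  proof
    fix x assume x: "x \<in> SV"
    obtain c r where xcr: "x = (c, r)" by (cases x)
    have vis: "(c, r) \<in> visited P \<rho> \<delta> (grid_cells z \<Delta> S)" and sp: "splits P \<rho> \<delta> (cell c r)"
      using x by (auto simp: SV_def xcr)
    obtain k i j where kij: "r = \<Delta> / 2^k" "c = z + (r * of_int i, r * of_int j)"
      using levels[OF vis] by blast
    have r0: "r \<ge> 0" using kij D by simp
    obtain p where pP: "p \<in> P" and dp: "dist p c \<le> 4 * r / \<delta>" and rr: "\<rho> < 4 * r / \<delta>"
      using split_geom[OF d r0 sp] by blast
    have "\<rho> * \<delta> < 4 * r" using rr d by (simp add: field_simps)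
    hence "2^k < Y" using kij(1) rho d D unfolding Y_def by (simp add: field_simps)
    hence kK: "k \<in> Ks" by (simp add: Ks_def)
    have "dist (fst c) (fst p) \<le> 4 * r / \<delta>" using dist_fst_le[of c p] dp by (simp add: dist_commute)
    hence iI: "i \<in> I p k" using kij by (simp add: I_def rk_def dist_real_def)
    have "dist (snd c) (snd p) \<le> 4 * r / \<delta>" using dist_snd_le[of c p] dp by (simp add: dist_commute)
    hence jJ: "j \<in> J p k" using kij by (simp add: J_def rk_def dist_real_def)
    have "x = F k (i, j)" using kij xcr by (simp add: F_def rk_def)
    thus "x \<in> (\<Union>p\<in>P. \<Union>k\<in>Ks. F k ` (I p k \<times> J p k))" using pP kK iI jJ by blast
  qed
  have finU: "finite (\<Union>p\<in>P. \<Union>k\<in>Ks. F k ` (I p k \<times> J p k))"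
    using P Ksf IJ by auto
  have "card SV \<le> card (\<Union>p\<in>P. \<Union>k\<in>Ks. F k ` (I p k \<times> J p k))"
    by (rule card_mono[OF finU sub])
  also have "\<dots> \<le> (\<Sum>p\<in>P. card (\<Union>k\<in>Ks. F k ` (I p k \<times> J p k)))"
    by (rule card_UN_le[OF P])
  also have "\<dots> \<le> (\<Sum>p\<in>P. \<Sum>k\<in>Ks. card (F k ` (I p k \<times> J p k)))"
    by (intro sum_mono card_UN_le[OF Ksf])
  also have "\<dots> \<le> (\<Sum>p\<in>P. \<Sum>k\<in>Ks. card (I p k) * card (J p k))"
    by (intro sum_mono) (metis card_cartesian_product card_image_le IJ finite_cartesian_product)
  finally have c1: "real (card SV) \<le> (\<Sum>p\<in>P. \<Sum>k\<in>Ks. real (card (I p k)) * real (card (J p k)))"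
    by (simp flip: of_nat_mult of_nat_sum)
  also have "\<dots> \<le> (\<Sum>p\<in>P. \<Sum>k\<in>Ks. (8 / \<delta> + 1)^2)"
    by (intro sum_mono) (metis IJ mult_mono of_nat_0_le_iff power2_eq_square order_trans)
  also have "\<dots> = real (card P) * real (card Ks) * (8 / \<delta> + 1)^2" by simp
  also have "\<dots> \<le> real (card P) * (log 2 Y + 1) * (8 / \<delta> + 1)^2"
    by (intro mult_right_mono mult_left_mono Ksc) auto
  finally show ?thesis using finite_subset[OF sub finU] by (simp add: Y_def)
qed

definition ch1 :: "pt \<times> real \<Rightarrow> pt \<times> real" where "ch1 x = (fst x, snd x / 2)"
definition ch2 :: "pt \<times> real \<Rightarrow> pt \<times> real" where "ch2 x = (fst x + (snd x / 2, 0), snd x / 2)"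
definition ch3 :: "pt \<times> real \<Rightarrow> pt \<times> real" where "ch3 x = (fst x + (0, snd x / 2), snd x / 2)"
definition ch4 :: "pt \<times> real \<Rightarrow> pt \<times> real" where "ch4 x = (fst x + (snd x / 2, snd x / 2), snd x / 2)"

lemma visited_sub:
  "visited P \<rho> \<delta> G \<subseteq> G \<union> (ch1 ` SV \<union> ch2 ` SV \<union> ch3 ` SV \<union> ch4 ` SV)"
  if "SV = {x \<in> visited P \<rho> \<delta> G. splits P \<rho> \<delta> (cell (fst x) (snd x))}"
proof
  fix x assume "x \<in> visited P \<rho> \<delta> G"
  thus "x \<in> G \<union> (ch1 ` SV \<union> ch2 ` SV \<union> ch3 ` SV \<union> ch4 ` SV)"
  proof (induction rule: visited.induct)
    case (base x) thus ?case by simp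
  next
    case (child c r d)
    have "(c, r) \<in> SV" using child(1,2) that by simp
    moreover have "(d, r/2) \<in> {ch1 (c,r), ch2 (c,r), ch3 (c,r), ch4 (c,r)}"
      using child(3) by (auto simp: ch1_def ch2_def ch3_def ch4_def)
    ultimately show ?case by blast
  qed
qed

lemma visited_card:
  assumes G: "finite G" and SVf: "finite SV"
    and SV: "SV = {x \<in> visited P \<rho> \<delta> G. splits P \<rho> \<delta> (cell (fst x) (snd x))}"
  shows "finite (visited P \<rho> \<delta> G) \<and> card (visited P \<rho> \<delta> G) \<le> card G + 4 * card SV"
proof -
  let ?U = "G \<union> (ch1 ` SV \<union> ch2 ` SV \<union> ch3 ` SV \<union> ch4 ` SV)"
  have sub: "visited P \<rho> \<delta> G \<subseteq> ?U" by (rule visited_sub[OF SV])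
  have fU: "finite ?U" using G SVf by simp
  have "card (visited P \<rho> \<delta> G) \<le> card ?U" by (rule card_mono[OF fU sub])
  also have "\<dots> \<le> card G + (card (ch1 ` SV) + card (ch2 ` SV) + card (ch3 ` SV) + card (ch4 ` SV))"
    by (meson card_Un_le add_mono le_refl order_trans)
  also have "\<dots> \<le> card G + 4 * card SV"
    using card_image_le[OF SVf, of ch1] card_image_le[OF SVf, of ch2]
      card_image_le[OF SVf, of ch3] card_image_le[OF SVf, of ch4] by linarith
  finally show ?thesis using finite_subset[OF sub fU] by simp
qed

lemma tri_in_cball:
  assumes "dist a b \<le> D" "dist c a \<le> D" "x \<in> triangle (a, b, c)"
  shows "dist a x \<le> D"
proof -
  have "dist a a \<le> D" using assms(1) zero_le_dist[of a b] by (simp only: dist_self)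
  hence "{a, b, c} \<subseteq> cball a D" using assms(1,2) by (auto simp: dist_commute)
  hence "convex hull {a, b, c} \<subseteq> cball a D" by (intro hull_minimal) auto
  thus ?thesis using assms(3) by (auto simp: triangle_def)
qed

lemma grid_count:
  fixes s :: "nat \<Rightarrow> pt \<times> pt \<times> pt"
  assumes D: "\<Delta> > 0" and edges: "\<And>k. k < m \<Longrightarrow> \<forall>e\<in>edge_lengths (s k). e \<le> \<Delta>"
  shows "finite (grid_cells z \<Delta> (s ` {..<m})) \<and> card (grid_cells z \<Delta> (s ` {..<m})) \<le> 25 * m"
proof -
  define I where "I k = {i::int. \<bar>fst z + \<Delta> * of_int i - fst (fst (s k))\<bar> \<le> 2 * \<Delta>}" for k
  define J where "J k = {i::int. \<bar>snd z + \<Delta> * of_int i - snd (fst (s k))\<bar> \<le> 2 * \<Delta>}" for k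
  define F where "F = (\<lambda>(i::int, j::int). (z + (of_int i * \<Delta>, of_int j * \<Delta>), \<Delta>))"
  have IJ: "finite (I k) \<and> finite (J k) \<and> card (I k) \<le> 5 \<and> card (J k) \<le> 5" for k
  proof -
    have e: "2 * (2 * \<Delta>) / \<Delta> = 4" using D by simp
    have "0 \<le> 2 * \<Delta>" using D by simp
    hence "finite (I k) \<and> finite (J k) \<and> real (card (I k)) \<le> 5 \<and> real (card (J k)) \<le> 5"
      using int_interval_card[OF D, of "2 * \<Delta>"] e unfolding I_def J_def by simp
    thus ?thesis by linarith
  qed
  have sub: "grid_cells z \<Delta> (s ` {..<m}) \<subseteq> (\<Union>k<m. F ` (I k \<times> J k))"
  proof
    fix x assume "x \<in> grid_cells z \<Delta> (s ` {..<m})"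
    then obtain i j k y where x: "x = (z + (of_int i * \<Delta>, of_int j * \<Delta>), \<Delta>)" and k: "k < m"
      and y1: "y \<in> cell (z + (of_int i * \<Delta>, of_int j * \<Delta>)) \<Delta>" and y2: "y \<in> triangle (s k)"
      unfolding grid_cells_def by blast
    obtain a b c where abc: "s k = (a, b, c)" by (cases "s k") auto
    have "dist a y \<le> \<Delta>"
      using tri_in_cball[of a b \<Delta> c y] edges[OF k] y2 abc by (simp add: edge_lengths_def)
    hence "\<bar>fst y - fst a\<bar> \<le> \<Delta>" "\<bar>snd y - snd a\<bar> \<le> \<Delta>"
      using dist_fst_le[of y a] dist_snd_le[of y a] by (simp_all add: dist_commute dist_real_def)
    moreover note y1[unfolded mem_cell]
    ultimately have "i \<in> I k" "j \<in> J k" by (auto simp: I_def J_def abc abs_le_iff mult.commute)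
    thus "x \<in> (\<Union>k<m. F ` (I k \<times> J k))" using x k by (force simp: F_def)
  qed
  have finU: "finite (\<Union>k<m. F ` (I k \<times> J k))" using IJ by auto
  have "card (grid_cells z \<Delta> (s ` {..<m})) \<le> card (\<Union>k<m. F ` (I k \<times> J k))"
    by (rule card_mono[OF finU sub])
  also have "\<dots> \<le> (\<Sum>k<m. card (F ` (I k \<times> J k)))" by (rule card_UN_le) simp
  also have "\<dots> \<le> (\<Sum>k<m. 25)"
  proof (rule sum_mono)
    fix k
    have "card (F ` (I k \<times> J k)) \<le> card (I k) * card (J k)"
      by (metis card_cartesian_product card_image_le IJ finite_cartesian_product)
    also have "\<dots> \<le> 5 * 5" using IJ[of k] by (intro mult_mono) auto
    finally show "card (F ` (I k \<times> J k)) \<le> 25" by simp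
  qed
  finally show ?thesis using finite_subset[OF sub finU] by simp
qed

lemma ln2_ge: "ln (2::real) \<ge> 1/2"
proof -
  have "ln (1/2::real) \<le> 1/2 - 1" by (rule ln_le_minus_one) simp
  thus ?thesis by (simp add: ln_div)
qed

theorem lemma9:
  "\<exists>K>0. \<forall>(n::nat) (m::nat) (p::nat \<Rightarrow> pt) (w::nat \<Rightarrow> real) (s::nat \<Rightarrow> pt \<times> pt \<times> pt)
          (\<Delta>::real) (\<delta>::real) (z::pt).
     inj_on p {..<n} \<and> (\<forall>i<n. w i > 0) \<and> (\<Sum>i<n. w i) = 1 \<and>
     (\<Sum>k<m. tri_area (s k)) = 1 \<and>
     \<Delta> = Max (\<Union>k<m. edge_lengths (s k)) \<and>
     0 < \<delta> \<and> \<delta> \<le> 1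
     \<longrightarrow> (let Q = subdivision (p ` {..<n}) (s ` {..<m}) z \<Delta> (\<delta> / sqrt (real (n * m))) \<delta>
          in finite Q \<and>
             real (card Q) \<le> K * (real (n * m) / \<delta>\<^sup>2) * ln (real (n * m) * \<Delta> / \<delta>))"
proof (intro exI[of _ "6000::real"] conjI allI impI)
  show "(0::real) < 6000" by simp
  fix n m :: nat and p :: "nat \<Rightarrow> pt" and w :: "nat \<Rightarrow> real" and s :: "nat \<Rightarrow> pt \<times> pt \<times> pt"
    and \<Delta> \<delta> :: real and z :: pt
  assume H: "inj_on p {..<n} \<and> (\<forall>i<n. w i > 0) \<and> (\<Sum>i<n. w i) = 1 \<and>
     (\<Sum>k<m. tri_area (s k)) = 1 \<and> \<Delta> = Max (\<Union>k<m. edge_lengths (s k)) \<and> 0 < \<delta> \<and> \<delta> \<le> 1"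
  hence wsum: "(\<Sum>i<n. w i) = 1" and asum: "(\<Sum>k<m. tri_area (s k)) = 1"
    and DM: "\<Delta> = Max (\<Union>k<m. edge_lengths (s k))" and d0: "0 < \<delta>" and d1: "\<delta> \<le> 1" by auto
  have n1: "n \<ge> 1" using wsum by (cases n) auto
  have m1: "m \<ge> 1" using asum by (cases m) auto
  have finE: "finite (\<Union>k<m. edge_lengths (s k))"
    by (auto simp: edge_lengths_def split: prod.splits)
  have edges: "\<forall>e\<in>edge_lengths (s k). e \<le> \<Delta>" if "k < m" for k
    using that DM finE by (auto intro: Max_ge)
  have area: "tri_area (s k) \<le> \<Delta>^2 / 2" if "k < m" for k
  proof -
    obtain a b c where abc: "s k = (a, b, c)" by (cases "s k") auto
    have "dist a b \<le> \<Delta>" "dist c a \<le> \<Delta>" using edges[OF that] abc by (auto simp: edge_lengths_def)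
    hence h: "dist a b \<le> \<Delta>" "dist a c \<le> \<Delta>" "0 \<le> \<Delta>" "0 \<le> dist a c"
      using zero_le_dist[of a b] by (simp_all add: dist_commute, linarith)
    have "dist a b * dist a c \<le> \<Delta> * \<Delta>" by (rule mult_mono[OF h])
    thus ?thesis using tri_area_le[of a b c] abc by (simp add: power2_eq_square)
  qed
  have "1 \<le> (\<Sum>k<m. \<Delta>^2 / 2)" unfolding asum[symmetric] by (intro sum_mono area) simp
  hence mD2: "2 \<le> real m * \<Delta>^2" by simp
  have D0: "\<Delta> \<ge> 0"
  proof -
    obtain a b c where abc: "s 0 = (a, b, c)" by (cases "s 0") auto
    have "dist a b \<le> \<Delta>" using edges[of 0] m1 abc by (auto simp: edge_lengths_def)
    thus ?thesis using zero_le_dist[of a b] by linarith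
  qed
  have Dpos: "\<Delta> > 0" using mD2 D0 by (cases "\<Delta> = 0") auto
  define N where "N = real (n * m)"
  have nm1: "1 \<le> n * m" "m \<le> n * m" "n \<le> n * m" using n1 m1 by simp_all
  have N1: "N \<ge> 1" unfolding N_def using nm1(1) by (metis of_nat_1 of_nat_le_iff)
  have Nm: "N \<ge> real m" unfolding N_def using nm1(2) by (metis of_nat_le_iff)
  have Nn: "N \<ge> real n" unfolding N_def using nm1(3) by (metis of_nat_le_iff)
  have mD: "real m * \<Delta> \<ge> sqrt 2"
  proof -
    have "(real m * \<Delta>)^2 = real m * (real m * \<Delta>^2)" by (simp add: power2_eq_square)
    also have "\<dots> \<ge> 1 * 2" using mD2 m1 by (intro mult_mono) auto
    finally have "2 \<le> (real m * \<Delta>)^2" by simp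
    hence "sqrt 2 \<le> sqrt ((real m * \<Delta>)^2)" by (rule real_sqrt_le_mono)
    thus ?thesis using Dpos by simp
  qed
  define X where "X = N * \<Delta> / \<delta>"
  have NDge: "N * \<Delta> \<ge> sqrt 2" using mD Nm Dpos by (meson mult_right_mono order_trans less_imp_le)
  have "0 \<le> N * \<Delta>" using N1 Dpos by simp
  hence "N * \<Delta> * \<delta> \<le> N * \<Delta>" using d0 d1 by (simp add: mult_right_le_one_le)
  hence "N * \<Delta> \<le> X" unfolding X_def using d0 by (simp add: le_divide_eq)
  hence Xge: "X \<ge> sqrt 2" using NDge by linarith
  have Xpos: "X > 0" using Xge by (metis less_le_trans real_sqrt_gt_zero zero_less_numeral)
  define L where "L = ln X"
  have Lge: "L \<ge> ln 2 / 2"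
  proof -
    have "ln (sqrt 2) \<le> ln X" using Xge Xpos by (subst ln_le_cancel_iff) auto
    thus ?thesis by (simp add: L_def ln_sqrt)
  qed
  have Lpos: "L \<ge> 1/4" using Lge ln2_ge by linarith
  define \<rho> where "\<rho> = \<delta> / sqrt N"
  have rho0: "\<rho> > 0" using d0 N1 by (simp add: \<rho>_def)
  define Y where "Y = 4 * \<Delta> / (\<rho> * \<delta>)"
  have Yeq: "Y = 4 * \<Delta> * sqrt N / \<delta>^2" using d0 N1 by (simp add: Y_def \<rho>_def power2_eq_square)
  have DsN: "\<Delta> * sqrt N \<ge> 1"
  proof -
    have "(\<Delta> * sqrt N)^2 = \<Delta>^2 * N" using N1 by (simp add: power_mult_distrib)
    also have "\<dots> \<ge> \<Delta>^2 * real m" using Nm by (intro mult_left_mono) auto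
    finally have "(\<Delta> * sqrt N)^2 \<ge> 1" using mD2 by (simp add: mult.commute)
    hence "sqrt 1 \<le> sqrt ((\<Delta> * sqrt N)^2)" by (rule real_sqrt_le_mono)
    thus ?thesis using Dpos N1 by simp
  qed
  have Y1: "Y \<ge> 1"
  proof -
    have "\<delta>^2 \<le> 1" using d0 d1 by (simp add: power_le_one)
    hence "4 * \<Delta> * sqrt N / \<delta>^2 \<ge> 4 * \<Delta> * sqrt N" using d0 Dpos N1
      by (simp add: le_divide_eq mult_left_le_one_le)
    thus ?thesis using Yeq DsN by linarith
  qed
  have YX: "Y \<le> 4 * X^2"
  proof -
    have s1: "1 \<le> sqrt N" using N1 by simp
    have "sqrt N * 1 \<le> sqrt N * sqrt N" using s1 by (intro mult_left_mono) auto
    hence "sqrt N \<le> N" using N1 by simp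
    also have "N \<le> N * (N * \<Delta>)"
    proof -
      have "1 \<le> sqrt (2::real)" by (rule real_sqrt_ge_one) simp
      hence "N * 1 \<le> N * (N * \<Delta>)" using NDge N1 by (intro mult_left_mono; linarith)
      thus ?thesis by simp
    qed
    finally have "\<Delta> * sqrt N \<le> \<Delta> * (N * (N * \<Delta>))" using Dpos by simp
    hence "4 * \<Delta> * sqrt N / \<delta>^2 \<le> 4 * (N * \<Delta>)^2 / \<delta>^2" using d0
      by (intro divide_right_mono) (auto simp: power2_eq_square algebra_simps)
    thus ?thesis by (simp add: Yeq X_def power_divide)
  qed
  have logY: "log 2 Y + 1 \<le> 16 * L"
  proof -
    have "ln Y \<le> ln (4 * X^2)" using Y1 YX by (subst ln_le_cancel_iff) auto
    also have "\<dots> = 2 * ln 2 + 2 * L"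
    proof -
      have "ln (4::real) = ln (2^2)" by simp
      also have "\<dots> = 2 * ln 2" by (subst ln_realpow) auto
      finally show ?thesis using Xpos by (simp add: L_def ln_mult ln_realpow)
    qed
    finally have "ln Y \<le> 2 * ln 2 + 2 * L" .
    hence "ln Y / ln 2 \<le> (2 * ln 2 + 2 * L) / ln 2" using ln2_ge by (intro divide_right_mono) auto
    also have "(2 * ln 2 + 2 * L) / ln 2 = 2 + 2 * L / ln 2" using ln2_ge by (simp add: add_divide_distrib)
    finally have "log 2 Y \<le> 2 + 2 * L / ln 2" by (simp add: log_def)
    moreover have "2 * L / ln 2 \<le> 4 * L" using ln2_ge Lpos by (simp add: divide_le_eq)
    moreover have "3 \<le> 12 * L" using Lpos by simp
    ultimately show ?thesis by linarith
  qed
  define P where "P = p ` {..<n}"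
  define S where "S = s ` {..<m}"
  have Pf: "finite P" unfolding P_def by simp
  have Pc: "card P \<le> n" unfolding P_def using card_image_le[of "{..<n}" p] by simp
  define G where "G = grid_cells z \<Delta> S"
  define SV where "SV = {x \<in> visited P \<rho> \<delta> G. splits P \<rho> \<delta> (cell (fst x) (snd x))}"
  have SVb: "finite SV \<and> real (card SV) \<le> real (card P) * (log 2 Y + 1) * (8 / \<delta> + 1)^2"
    using split_count[OF Pf d0 d1 rho0 Dpos, where z=z and S=S] Y1 unfolding Y_def SV_def G_def by simp
  have Gb: "finite G \<and> card G \<le> 25 * m"
    using grid_count[where z=z and m=m and s=s, OF Dpos edges] unfolding G_def S_def by blast
  have Vb: "finite (visited P \<rho> \<delta> G) \<and> card (visited P \<rho> \<delta> G) \<le> card G + 4 * card SV"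
    using visited_card[OF _ _ SV_def] Gb SVb by blast
  have Qsub: "subdivision P S z \<Delta> \<rho> \<delta> \<subseteq> (\<lambda>x. cell (fst x) (snd x)) ` visited P \<rho> \<delta> G"
    unfolding subdivision_def G_def by (auto intro: rev_image_eqI)
  have Qf: "finite (subdivision P S z \<Delta> \<rho> \<delta>)" using Qsub Vb finite_subset by blast
  have "card (subdivision P S z \<Delta> \<rho> \<delta>) \<le> card ((\<lambda>x. cell (fst x) (snd x)) ` visited P \<rho> \<delta> G)"
    using Qsub Vb by (intro card_mono) auto
  also have "\<dots> \<le> card (visited P \<rho> \<delta> G)" using Vb card_image_le by blast
  finally have cQ: "real (card (subdivision P S z \<Delta> \<rho> \<delta>)) \<le> 25 * real m + 4 * real (card SV)"
    using Vb Gb by linarith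
  have e9: "8 / \<delta> + 1 \<le> 9 / \<delta>" using d0 d1 by (simp add: field_simps)
  have "real (card SV) \<le> real n * (16 * L) * (9 / \<delta>)^2"
  proof -
    have "real (card SV) \<le> real (card P) * (log 2 Y + 1) * (8 / \<delta> + 1)^2" using SVb by simp
    also have "\<dots> \<le> real n * (16 * L) * (9 / \<delta>)^2"
    proof -
      have l0: "0 \<le> log 2 Y + 1" using Y1 by simp
      have a: "real (card P) * (log 2 Y + 1) \<le> real n * (16 * L)"
        by (rule mult_mono) (use Pc logY l0 in auto)
      have p0: "0 \<le> 8 / \<delta> + 1" using d0 by simp
      have b: "(8 / \<delta> + 1)^2 \<le> (9 / \<delta>)^2" by (rule power_mono[OF e9 p0])
      have "0 \<le> real n * (16 * L)" using Lpos by simp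
      thus ?thesis by (intro mult_mono[OF a b]) auto
    qed
    finally show ?thesis .
  qed
  hence cSV: "4 * real (card SV) \<le> 5184 * (real n / \<delta>^2) * L" by (simp add: power_divide)
  have "real m * 1 \<le> real m * (4 * L)" using Lpos by (intro mult_left_mono) auto
  hence "25 * real m \<le> 100 * real m * L" by (simp add: algebra_simps)
  also have "\<dots> \<le> 100 * (N / \<delta>^2) * L"
  proof -
    have "\<delta>^2 \<le> 1" using d0 d1 by (simp add: power_le_one)
    hence "N * \<delta>^2 \<le> N" using N1 by (simp add: mult_right_le_one_le)
    hence "N \<le> N / \<delta>^2" using d0 by (simp add: le_divide_eq)
    hence "real m \<le> N / \<delta>^2" using Nm by linarith
    thus ?thesis using Lpos by (intro mult_right_mono mult_left_mono) auto
  qed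
  finally have c1: "25 * real m \<le> 100 * (N / \<delta>^2) * L" .
  have "real n / \<delta>^2 \<le> N / \<delta>^2" using Nn d0 by (simp add: divide_right_mono)
  hence c2: "5184 * (real n / \<delta>^2) * L \<le> 5184 * (N / \<delta>^2) * L" using Lpos by (intro mult_right_mono) auto
  have "0 \<le> (N / \<delta>^2) * L" using Lpos N1 by simp
  hence "real (card (subdivision P S z \<Delta> \<rho> \<delta>)) \<le> 6000 * (N / \<delta>^2) * L"
  proof -
    have e: "5184 * (N / \<delta>^2) * L = 5184 * ((N / \<delta>^2) * L)" "100 * (N / \<delta>^2) * L = 100 * ((N / \<delta>^2) * L)"
      "6000 * (N / \<delta>^2) * L = 6000 * ((N / \<delta>^2) * L)" by (simp_all only: mult.assoc)
    show ?thesis using cQ cSV c1 c2 \<open>0 \<le> (N / \<delta>^2) * L\<close> unfolding e by linarith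
  qed
  thus "let Q = subdivision (p ` {..<n}) (s ` {..<m}) z \<Delta> (\<delta> / sqrt (real (n * m))) \<delta>
          in finite Q \<and> real (card Q) \<le> 6000 * (real (n * m) / \<delta>\<^sup>2) * ln (real (n * m) * \<Delta> / \<delta>)"
    using Qf by (simp add: Let_def P_def S_def \<rho>_def N_def L_def X_def)
qed

end
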